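(* Let $d\ge 1$ and let $\mathcal{L}_{\leq d}$ be the set of all lonesum $0$-$1$ matrices (of any size, including the empty $0\times 0$ matrix) with no all-zero row and no all-zero column, in which at most $d$ columns are of the same type and at most $d$ rows are of the same type. For a matrix $M$ let $r(M)$ and $c(M)$ be its numbers of rows and columns, and define the formal power series \[ L_{\leq d}(x,y)=\sum_{M\in\mathcal{L}_{\leq d}}\frac{x^{r(M)}}{r(M)!}\frac{y^{c(M)}}{c(M)!}. \] Then \[ L_{\leq d}(x,y)=\frac{1}{E_d(x)+E_d(y)-E_d(x)E_d(y)},\qquad\text{where } E_d(z)=\sum_{i=0}^{d}\frac{z^i}{i!}. \]
   Context: A $0$-$1$ matrix is lonesum if it is uniquely determined by its row sum vector and column sum vector; equivalently, it contains no $2\times 2$ submatrix equal to $\begin{pmatrix}1&0\\0&1\end{pmatrix}$ or $\begin{pmatrix}0&1\\1&0\end{pmatrix}$. Two rows (resp. columns) are of the same type iff they are identical vectors. *)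

theory Defs
  imports "HOL-Computational_Algebra.Formal_Power_Series"
begin

text \<open>An r x c 0-1 matrix is a function M :: nat => nat => bool that is False
outside the index range {0..<r} x {0..<c}.\<close>
definition mats :: "nat \<Rightarrow> nat \<Rightarrow> (nat \<Rightarrow> nat \<Rightarrow> bool) set" where
  "mats r c = {M. \<forall>i j. M i j \<longrightarrow> i < r \<and> j < c}"

definition row_sum :: "nat \<Rightarrow> (nat \<Rightarrow> nat \<Rightarrow> bool) \<Rightarrow> nat \<Rightarrow> nat" where
  "row_sum c M i = card {j. j < c \<and> M i j}"

definition col_sum :: "nat \<Rightarrow> (nat \<Rightarrow> nat \<Rightarrow> bool) \<Rightarrow> nat \<Rightarrow> nat" where
  "col_sum r M j = card {i. i < r \<and> M i j}"

definition lonesum :: "nat \<Rightarrow> nat \<Rightarrow> (nat \<Rightarrow> nat \<Rightarrow> bool) \<Rightarrow> bool" where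
  "lonesum r c M \<longleftrightarrow> (\<forall>N \<in> mats r c.
      (\<forall>i<r. row_sum c N i = row_sum c M i) \<and> (\<forall>j<c. col_sum r N j = col_sum r M j)
      \<longrightarrow> N = M)"

definition same_row :: "nat \<Rightarrow> (nat \<Rightarrow> nat \<Rightarrow> bool) \<Rightarrow> nat \<Rightarrow> nat \<Rightarrow> bool" where
  "same_row c M i i' \<longleftrightarrow> (\<forall>j<c. M i j = M i' j)"

definition same_col :: "nat \<Rightarrow> (nat \<Rightarrow> nat \<Rightarrow> bool) \<Rightarrow> nat \<Rightarrow> nat \<Rightarrow> bool" where
  "same_col r M j j' \<longleftrightarrow> (\<forall>i<r. M i j = M i j')"

definition in_L :: "nat \<Rightarrow> nat \<Rightarrow> nat \<Rightarrow> (nat \<Rightarrow> nat \<Rightarrow> bool) \<Rightarrow> bool" where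
  "in_L d r c M \<longleftrightarrow> M \<in> mats r c \<and> lonesum r c M
     \<and> (\<forall>i<r. \<exists>j<c. M i j) \<and> (\<forall>j<c. \<exists>i<r. M i j)
     \<and> (\<forall>i<r. card {i'. i' < r \<and> same_row c M i i'} \<le> d)
     \<and> (\<forall>j<c. card {j'. j' < c \<and> same_col r M j j'} \<le> d)"

text \<open>Bivariate exponential generating function as a power series in x
whose coefficients are power series in y.\<close>
definition L_series :: "nat \<Rightarrow> rat fps fps" where
  "L_series d = Abs_fps (\<lambda>r. Abs_fps (\<lambda>c.
      of_nat (card {M. in_L d r c M}) / (fact r * fact c)))"

definition E_trunc :: "nat \<Rightarrow> rat fps" where
  "E_trunc d = Abs_fps (\<lambda>i. if i \<le> d then 1 / fact i else 0)"

definition E_x :: "nat \<Rightarrow> rat fps fps" where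
  "E_x d = Abs_fps (\<lambda>i. fps_const (fps_nth (E_trunc d) i))"

definition E_y :: "nat \<Rightarrow> rat fps fps" where
  "E_y d = fps_const (E_trunc d)"

end

theory Submission
  imports Defs
begin

unbundle fps_syntax

definition FF :: "nat \<Rightarrow> rat fps" where "FF d = E_trunc d - 1"
definition aa :: "nat \<Rightarrow> nat \<Rightarrow> nat \<Rightarrow> rat" where "aa d n k = (FF d ^ k) $ n"

lemma FF_nth: "FF d $ s = (if 1 \<le> s \<and> s \<le> d then 1 / fact s else 0)"
  by (auto simp: FF_def E_trunc_def)

lemma FF_0[simp]: "FF d $ 0 = 0" by (simp add: FF_nth)

lemma aa_Suc: "aa d n (Suc k) = (\<Sum>s=0..n. FF d $ s * aa d (n-s) k)"
  by (simp add: aa_def fps_mult_nth)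

lemma aa_0: "aa d n 0 = (if n = 0 then 1 else 0)"
  by (simp add: aa_def)

lemma aa_zero: "n < k \<Longrightarrow> aa d n k = 0"
proof (induction k arbitrary: n)
  case 0 then show ?case by simp
next
  case (Suc k)
  have "(\<Sum>s=0..n. FF d $ s * aa d (n-s) k) = 0"
  proof (rule sum.neutral, intro ballI)
    fix s assume "s \<in> {0..n}"
    show "FF d $ s * aa d (n-s) k = 0"
    proof (cases "s = 0")
      case True then show ?thesis by simp
    next
      case False then have "n - s < k" using Suc.prems \<open>s \<in> {0..n}\<close> by auto
      then show ?thesis using Suc.IH by simp
    qed
  qed
  then show ?case by (simp add: aa_Suc)
qed

definition valid :: "nat \<Rightarrow> nat set \<Rightarrow> nat \<Rightarrow> (nat \<Rightarrow> nat) \<Rightarrow> bool" where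
  "valid d A k f \<longleftrightarrow> (\<forall>i. i \<notin> A \<longrightarrow> f i = 0) \<and> (\<forall>i\<in>A. 1 \<le> f i \<and> f i \<le> k)
     \<and> (\<forall>a\<in>{1..k}. \<exists>i\<in>A. f i = a) \<and> (\<forall>a. card {i\<in>A. f i = a} \<le> d)"

definition VS :: "nat \<Rightarrow> nat set \<Rightarrow> nat \<Rightarrow> (nat \<Rightarrow> nat) set" where
  "VS d A k = {f. valid d A k f}"

lemma finite_VS: assumes "finite A" shows "finite (VS d A k)"
proof -
  have "VS d A k \<subseteq> {f. \<forall>x. (x \<in> A \<longrightarrow> f x \<in> {0..k}) \<and> (x \<notin> A \<longrightarrow> f x = 0)}"
    by (auto simp: VS_def valid_def)
  then show ?thesis using finite_set_of_finite_funs[OF assms, of "{0..k}" 0] finite_subset by blast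
qed

lemma VS_0: "VS d A 0 = (if A = {} then {\<lambda>_. 0} else {})"
  by (auto simp: VS_def valid_def)

lemma VS_Suc:
  assumes fin: "finite A"
  shows "card (VS d A (Suc k)) = (\<Sum>S\<in>{S. S \<subseteq> A \<and> 1 \<le> card S \<and> card S \<le> d}. card (VS d (A - S) k))"
proof -
  define SS where "SS = {S. S \<subseteq> A \<and> 1 \<le> card S \<and> card S \<le> d}"
  define P where "P S = {f \<in> VS d A (Suc k). {i\<in>A. f i = Suc k} = S}" for S
  have finSS: "finite SS" unfolding SS_def by (rule finite_subset[of _ "Pow A"]) (use fin in auto)
  have U: "VS d A (Suc k) = (\<Union>S\<in>SS. P S)"
  proof (intro equalityI subsetI)
    fix f assume f: "f \<in> VS d A (Suc k)"
    let ?S = "{i\<in>A. f i = Suc k}"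
    have "?S \<noteq> {}" using f by (auto simp: VS_def valid_def)
    then have "1 \<le> card ?S" using fin by (simp add: Suc_le_eq card_gt_0_iff)
    moreover have "card ?S \<le> d" using f by (auto simp: VS_def valid_def)
    ultimately have "?S \<in> SS" by (auto simp: SS_def)
    then show "f \<in> (\<Union>S\<in>SS. P S)" using f by (auto simp: P_def)
  qed (auto simp: P_def)
  have cardP: "card (P S) = card (VS d (A - S) k)" if S: "S \<in> SS" for S
  proof -
    have SA: "S \<subseteq> A" and S1: "S \<noteq> {}" and Sd: "card S \<le> d"
      using S fin by (auto simp: SS_def)
    define h where "h f = (\<lambda>i. if f i = Suc k then 0 else f i)" for f :: "nat \<Rightarrow> nat"
    define w where "w g = (\<lambda>i. if i \<in> S then Suc k else g i)" for g :: "nat \<Rightarrow> nat"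
    have "bij_betw h (P S) (VS d (A - S) k)"
    proof (rule bij_betw_byWitness[where f'=w])
      show "\<forall>f\<in>P S. w (h f) = f"
      proof
        fix f assume f: "f \<in> P S"
        show "w (h f) = f"
        proof
          fix i show "w (h f) i = f i"
            using f unfolding P_def VS_def valid_def w_def h_def by (cases "i \<in> A") auto
        qed
      qed
      show "\<forall>g\<in>VS d (A - S) k. h (w g) = g"
      proof
        fix g assume g: "g \<in> VS d (A - S) k"
        show "h (w g) = g"
        proof
          fix i
          have gv: "valid d (A - S) k g" using g by (simp add: VS_def)
          show "h (w g) i = g i"
          proof (cases "i \<in> S")
            case True then have "g i = 0" using gv unfolding valid_def by auto
            then show ?thesis using True unfolding w_def h_def by simp
          next
            case False
            have "g i \<noteq> Suc k"
            proof (cases "i \<in> A")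
              case True then have "g i \<le> k" using gv False unfolding valid_def by auto
              then show ?thesis by simp
            next
              case False then show ?thesis using gv unfolding valid_def by auto
            qed
            then show ?thesis using False unfolding w_def h_def by simp
          qed
        qed
      qed
      show "h ` P S \<subseteq> VS d (A - S) k"
      proof
        fix g assume "g \<in> h ` P S"
        then obtain f where f: "f \<in> P S" and gf: "g = h f" by auto
        have fv: "valid d A (Suc k) f" and fS: "{i\<in>A. f i = Suc k} = S"
          using f by (auto simp: P_def VS_def)
        have "valid d (A - S) k g"
          unfolding valid_def
        proof (intro conjI allI ballI impI)
          fix i assume "i \<notin> A - S" then show "g i = 0"
            using fv fS unfolding gf h_def valid_def by auto
        next
          fix i assume "i \<in> A - S" then show "1 \<le> g i" "g i \<le> k"
            using fv fS unfolding gf h_def valid_def by (auto simp: le_Suc_eq)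
        next
          fix a assume a: "a \<in> {1..k}"
          then obtain i where "i \<in> A" "f i = a" using fv unfolding valid_def by force
          then show "\<exists>i\<in>A - S. g i = a" using a fS unfolding gf h_def by (intro bexI[of _ i]) auto
        next
          fix a
          have "{i \<in> A - S. g i = a} \<subseteq> {i \<in> A. f i = a}" using fS unfolding gf h_def by auto
          then have "card {i \<in> A - S. g i = a} \<le> card {i \<in> A. f i = a}"
            by (rule card_mono[rotated]) (use fin in auto)
          then show "card {i \<in> A - S. g i = a} \<le> d" using fv unfolding valid_def by (meson le_trans)
        qed
        then show "g \<in> VS d (A - S) k" by (simp add: VS_def)
      qed
      show "w ` VS d (A - S) k \<subseteq> P S"
      proof
        fix f assume "f \<in> w ` VS d (A - S) k"
        then obtain g where gv: "valid d (A - S) k g" and fg: "f = w g" by (auto simp: VS_def)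
        have gk: "\<forall>i\<in>A - S. g i \<le> k" using gv unfolding valid_def by auto
        have fS: "{i\<in>A. f i = Suc k} = S" using gk SA unfolding fg w_def by force
        have "valid d A (Suc k) f"
          unfolding valid_def
        proof (intro conjI allI ballI impI)
          fix i assume "i \<notin> A" then show "f i = 0"
            using gv SA unfolding fg w_def valid_def by auto
        next
          fix i assume iA: "i \<in> A"
          have "1 \<le> f i \<and> f i \<le> Suc k"
          proof (cases "i \<in> S")
            case True then show ?thesis by (simp add: fg w_def)
          next
            case False then have "i \<in> A - S" using iA by simp
            then have "1 \<le> g i \<and> g i \<le> k" using gv unfolding valid_def by blast
            then show ?thesis using False by (simp add: fg w_def)
          qed
          then show "1 \<le> f i" "f i \<le> Suc k" by auto
        next
          fix a assume a: "a \<in> {1..Suc k}"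
          show "\<exists>i\<in>A. f i = a"
          proof (cases "a = Suc k")
            case True then show ?thesis using S1 SA unfolding fg w_def by auto
          next
            case False
            then obtain i where "i \<in> A - S" "g i = a" using a gv unfolding valid_def by force
            then show ?thesis unfolding fg w_def by auto
          qed
        next
          fix a
          show "card {i \<in> A. f i = a} \<le> d"
          proof (cases "a = Suc k")
            case True then show ?thesis using fS Sd by simp
          next
            case False
            then have "{i \<in> A. f i = a} = {i \<in> A - S. g i = a}" unfolding fg w_def by auto
            then show ?thesis using gv unfolding valid_def by simp
          qed
        qed
        then show "f \<in> P S" using fS by (simp add: P_def VS_def)
      qed
    qed
    then show ?thesis by (rule bij_betw_same_card)
  qed
  have "card (VS d A (Suc k)) = (\<Sum>S\<in>SS. card (P S))"
    unfolding U
  proof (rule card_UN_disjoint[OF finSS])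
    show "\<forall>S\<in>SS. finite (P S)" using finite_VS[OF fin, of d "Suc k"] by (auto simp: P_def)
    show "\<forall>S\<in>SS. \<forall>T\<in>SS. S \<noteq> T \<longrightarrow> P S \<inter> P T = {}" by (auto simp: P_def)
  qed
  also have "\<dots> = (\<Sum>S\<in>SS. card (VS d (A - S) k))" by (rule sum.cong) (auto simp: cardP)
  finally show ?thesis by (simp add: SS_def)
qed

lemma sum_by_card:
  fixes h :: "nat \<Rightarrow> 'b::comm_semiring_1"
  assumes fin: "finite A"
  shows "(\<Sum>S\<in>{S. S \<subseteq> A \<and> P (card S)}. h (card S)) = (\<Sum>s\<in>{s. s \<le> card A \<and> P s}. of_nat (card A choose s) * h s)"
proof -
  let ?SS = "{S. S \<subseteq> A \<and> P (card S)}"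
  let ?T = "{s. s \<le> card A \<and> P s}"
  have finSS: "finite ?SS" by (rule finite_subset[of _ "Pow A"]) (use fin in auto)
  have "(\<Sum>S\<in>?SS. h (card S)) = (\<Sum>s\<in>?T. \<Sum>S\<in>{S \<in> ?SS. card S = s}. h (card S))"
    by (rule sum.group[symmetric, OF finSS]) (use fin card_mono in auto)
  also have "\<dots> = (\<Sum>s\<in>?T. of_nat (card A choose s) * h s)"
  proof (rule sum.cong[OF refl])
    fix s assume s: "s \<in> ?T"
    have "{S \<in> ?SS. card S = s} = {S. S \<subseteq> A \<and> card S = s}" using s by auto
    then show "(\<Sum>S\<in>{S \<in> ?SS. card S = s}. h (card S)) = of_nat (card A choose s) * h s"
      using n_subsets[OF fin, of s] by simp
  qed
  finally show ?thesis .
qed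

lemma card_VS: "finite A \<Longrightarrow> of_nat (card (VS d A k)) = fact (card A) * aa d (card A) k"
proof (induction k arbitrary: A)
  case 0 then show ?case by (simp add: VS_0 aa_0)
next
  case (Suc k)
  let ?n = "card A"
  have "of_nat (card (VS d A (Suc k))) = (\<Sum>S\<in>{S. S \<subseteq> A \<and> 1 \<le> card S \<and> card S \<le> d}. (of_nat (card (VS d (A - S) k)) :: rat))"
    by (simp add: VS_Suc[OF Suc.prems])
  also have "\<dots> = (\<Sum>S\<in>{S. S \<subseteq> A \<and> 1 \<le> card S \<and> card S \<le> d}. fact (?n - card S) * aa d (?n - card S) k)"
  proof (rule sum.cong[OF refl])
    fix S assume "S \<in> {S. S \<subseteq> A \<and> 1 \<le> card S \<and> card S \<le> d}"
    then have "card (A - S) = ?n - card S" using Suc.prems by (auto intro!: card_Diff_subset intro: finite_subset)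
    then show "(of_nat (card (VS d (A - S) k)) :: rat) = fact (?n - card S) * aa d (?n - card S) k"
      using Suc.IH[of "A - S"] Suc.prems by simp
  qed
  also have "\<dots> = (\<Sum>s\<in>{s. s \<le> ?n \<and> 1 \<le> s \<and> s \<le> d}. of_nat (?n choose s) * (fact (?n - s) * aa d (?n - s) k))"
    using sum_by_card[OF Suc.prems, where P="\<lambda>s::nat. 1 \<le> s \<and> s \<le> d" and h="\<lambda>s::nat. (fact (card A - s) * aa d (card A - s) k :: rat)"]
    by simp
  also have "\<dots> = (\<Sum>s\<in>{s\<in>{0..?n}. 1 \<le> s \<and> s \<le> d}. fact ?n * (1 / fact s * aa d (?n - s) k))"
  proof (rule sum.cong)
    fix s assume s: "s \<in> {s\<in>{0..?n}. 1 \<le> s \<and> s \<le> d}"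
    then have "(of_nat (?n choose s) :: rat) = fact ?n / (fact s * fact (?n - s))"
      by (simp add: binomial_fact)
    then show "of_nat (?n choose s) * (fact (?n - s) * aa d (?n - s) k) = fact ?n * (1 / fact s * aa d (?n - s) k)"
      by (simp add: field_simps)
  qed auto
  also have "\<dots> = (\<Sum>s\<in>{0..?n}. fact ?n * (FF d $ s * aa d (?n - s) k))"
  proof -
    have "(\<Sum>s\<in>{0..?n}. fact ?n * (FF d $ s * aa d (?n - s) k))
        = (\<Sum>s\<in>{0..?n}. if 1 \<le> s \<and> s \<le> d then fact ?n * (1 / fact s * aa d (?n - s) k) else 0)"
      by (rule sum.cong) (auto simp: FF_nth)
    also have "\<dots> = (\<Sum>s\<in>{s\<in>{0..?n}. 1 \<le> s \<and> s \<le> d}. fact ?n * (1 / fact s * aa d (?n - s) k))"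
      by (rule sum.inter_filter[symmetric]) simp
    finally show ?thesis by simp
  qed
  also have "\<dots> = fact ?n * aa d ?n (Suc k)"
    by (simp add: aa_Suc sum_distrib_left)
  finally show ?case .
qed

definition mk :: "nat \<Rightarrow> nat \<Rightarrow> nat \<Rightarrow> (nat \<Rightarrow> nat) \<Rightarrow> (nat \<Rightarrow> nat) \<Rightarrow> nat \<Rightarrow> nat \<Rightarrow> bool" where
  "mk r c k f g = (\<lambda>i j. i < r \<and> j < c \<and> k < f i + g j)"

lemma row_sum_int: "(\<Sum>j<c. (of_bool (X i j) :: int)) = int (row_sum c X i)"
proof -
  have "{..<c} \<inter> {j. X i j} = {j. j < c \<and> X i j}" by auto
  then show ?thesis by (simp add: sum_of_bool_eq row_sum_def)
qed

lemma col_sum_int: "(\<Sum>i<r. (of_bool (X i j) :: int)) = int (col_sum r X j)"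
proof -
  have "{..<r} \<inter> {i. X i j} = {i. i < r \<and> X i j}" by auto
  then show ?thesis by (simp add: sum_of_bool_eq col_sum_def)
qed

lemma sum_uv:
  fixes X :: "nat \<Rightarrow> nat \<Rightarrow> int"
  shows "(\<Sum>i<r. \<Sum>j<c. X i j * (u i + v j)) = (\<Sum>i<r. u i * (\<Sum>j<c. X i j)) + (\<Sum>j<c. v j * (\<Sum>i<r. X i j))"
  by (simp add: distrib_left sum.distrib sum_distrib_left sum.swap[of _ "{..<c}"] algebra_simps)

lemma mk_lonesum:
  fixes f g :: "nat \<Rightarrow> nat"
  shows "lonesum r c (mk r c k f g)"
  unfolding lonesum_def
proof (intro ballI impI)
  let ?M = "mk r c k f g"
  fix N assume N: "N \<in> mats r c"
    and sums: "(\<forall>i<r. row_sum c N i = row_sum c ?M i) \<and> (\<forall>j<c. col_sum r N j = col_sum r ?M j)"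
  define u where "u i = 2 * int (f i) - 2 * int k - 1" for i
  define v where "v j = 2 * int (g j)" for j
  define X where "X i j = (of_bool (N i j) - of_bool (?M i j) :: int)" for i j
  have rowX: "(\<Sum>j<c. X i j) = 0" if "i < r" for i
    using sums that by (simp add: X_def sum_subtractf row_sum_int)
  have colX: "(\<Sum>i<r. X i j) = 0" if "j < c" for j
    using sums that by (simp add: X_def sum_subtractf col_sum_int)
  have S0: "(\<Sum>i<r. \<Sum>j<c. X i j * (u i + v j)) = 0"
    unfolding sum_uv using rowX colX by simp
  have nonneg: "0 \<le> - (X i j * (u i + v j))" if "i < r" "j < c" for i j
    using that unfolding X_def u_def v_def mk_def by (cases "N i j") auto
  have inner0: "(\<Sum>j<c. - (X i j * (u i + v j))) = 0" if "i < r" for i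
  proof -
    have "(\<Sum>i<r. \<Sum>j<c. - (X i j * (u i + v j))) = 0" using S0 by (simp add: sum_negf)
    moreover have "\<forall>i\<in>{..<r}. 0 \<le> (\<Sum>j<c. - (X i j * (u i + v j)))"
      using nonneg by (auto intro!: sum_nonneg)
    ultimately show ?thesis using that by (subst (asm) sum_nonneg_eq_0_iff) auto
  qed
  have t0: "X i j * (u i + v j) = 0" if "i < r" "j < c" for i j
  proof -
    have "- (X i j * (u i + v j)) = 0"
      using inner0[OF that(1)] nonneg that by (subst (asm) sum_nonneg_eq_0_iff) auto
    then show ?thesis by simp
  qed
  show "N = ?M"
  proof (intro ext)
    fix i j
    show "N i j = ?M i j"
    proof (cases "i < r \<and> j < c")
      case True
      then have "X i j * (u i + v j) = 0" using t0 by simp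
      moreover have "u i + v j \<noteq> 0" unfolding u_def v_def by presburger
      ultimately have "X i j = 0" by simp
      then show ?thesis unfolding X_def by (cases "N i j"; cases "?M i j") auto
    next
      case False
      then show ?thesis using N by (auto simp: mats_def mk_def)
    qed
  qed
qed

lemma valid_le: "valid d {0..<r} k f \<Longrightarrow> k \<le> r"
proof -
  assume v: "valid d {0..<r} k f"
  then have "{1..k} \<subseteq> f ` {0..<r}" unfolding valid_def by force
  then have "card {1..k} \<le> card (f ` {0..<r})" by (rule card_mono[rotated]) simp
  also have "\<dots> \<le> card {0..<r}" by (rule card_image_le) simp
  finally show ?thesis by simp
qed

lemma valid_range: "valid d {0..<r} k f \<Longrightarrow> i < r \<Longrightarrow> 1 \<le> f i \<and> f i \<le> k"
  unfolding valid_def by auto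

lemma valid_surj: "valid d {0..<r} k f \<Longrightarrow> 1 \<le> a \<Longrightarrow> a \<le> k \<Longrightarrow> \<exists>i<r. f i = a"
  unfolding valid_def by force

lemma sep:
  assumes g: "valid d {0..<c} k g" and ab: "1 \<le> a" "a < b" "b \<le> k"
  shows "\<exists>j<c. k < b + g j \<and> \<not> k < a + g j"
proof -
  have "1 \<le> k + 1 - b" "k + 1 - b \<le> k" using ab by auto
  then obtain j where "j < c" "g j = k + 1 - b" using valid_surj[OF g, of "k + 1 - b"] by blast
  then show ?thesis using ab by (intro exI[of _ j]) auto
qed

lemma rowpart:
  assumes f: "valid d {0..<r} k f" and g: "valid d {0..<c} k g"
  shows "(\<forall>i<r. \<exists>j<c. mk r c k f g i j) \<and> (\<forall>i<r. card {i'. i' < r \<and> same_row c (mk r c k f g) i i'} \<le> d)"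
proof (intro conjI allI impI)
  fix i assume i: "i < r"
  have fi: "1 \<le> f i" "f i \<le> k" using valid_range[OF f i] by auto
  obtain j where "j < c" "g j = k" using valid_surj[OF g, of k] fi by auto
  then show "\<exists>j<c. mk r c k f g i j" using i fi by (auto simp: mk_def)
  have eq: "{i'. i' < r \<and> same_row c (mk r c k f g) i i'} = {i' \<in> {0..<r}. f i' = f i}"
  proof (intro equalityI subsetI)
    fix i' assume "i' \<in> {i'. i' < r \<and> same_row c (mk r c k f g) i i'}"
    then have i': "i' < r" and sr: "\<forall>j<c. (k < f i + g j) = (k < f i' + g j)"
      using i by (auto simp: same_row_def mk_def)
    have fi': "1 \<le> f i'" "f i' \<le> k" using valid_range[OF f i'] by auto
    show "i' \<in> {i' \<in> {0..<r}. f i' = f i}"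
    proof (rule ccontr)
      assume "i' \<notin> {i' \<in> {0..<r}. f i' = f i}"
      then have "f i' < f i \<or> f i < f i'" using i' by auto
      then show False
      proof
        assume "f i' < f i"
        then obtain j where "j < c" "k < f i + g j" "\<not> k < f i' + g j" using sep[OF g] fi fi' by blast
        then show False using sr by auto
      next
        assume "f i < f i'"
        then obtain j where "j < c" "k < f i' + g j" "\<not> k < f i + g j" using sep[OF g] fi fi' by blast
        then show False using sr by auto
      qed
    qed
  qed (use i in \<open>auto simp: same_row_def mk_def\<close>)
  show "card {i'. i' < r \<and> same_row c (mk r c k f g) i i'} \<le> d"
    unfolding eq using f unfolding valid_def by blast
qed

lemma mk_transpose: "(\<lambda>j i. mk r c k f g i j) = mk c r k g f"
  by (intro ext) (auto simp: mk_def)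

lemma same_col_row: "same_col r M j j' = same_row r (\<lambda>j i. M i j) j j'"
  by (simp add: same_col_def same_row_def)

lemma mk_in_L:
  assumes f: "valid d {0..<r} k f" and g: "valid d {0..<c} k g"
  shows "in_L d r c (mk r c k f g)"
proof -
  have R: "(\<forall>i<r. \<exists>j<c. mk r c k f g i j) \<and> (\<forall>i<r. card {i'. i' < r \<and> same_row c (mk r c k f g) i i'} \<le> d)"
    by (rule rowpart[OF f g])
  have C: "(\<forall>j<c. \<exists>i<r. mk c r k g f j i) \<and> (\<forall>j<c. card {j'. j' < c \<and> same_row r (mk c r k g f) j j'} \<le> d)"
    by (rule rowpart[OF g f])
  have T: "\<And>i j. mk c r k g f j i = mk r c k f g i j" by (auto simp: mk_def)
  have SC: "\<And>j j'. same_col r (mk r c k f g) j j' = same_row r (mk c r k g f) j j'"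
    by (simp add: same_col_def same_row_def T)
  have C1: "\<forall>j<c. \<exists>i<r. mk r c k f g i j" using C by (simp add: T)
  have C2: "\<forall>j<c. card {j'. j' < c \<and> same_col r (mk r c k f g) j j'} \<le> d" using C by (simp add: SC)
  have Mm: "mk r c k f g \<in> mats r c" by (simp add: mats_def mk_def)
  show ?thesis unfolding in_L_def using R C1 C2 Mm mk_lonesum[of r c k f g] by blast
qed

lemma recover:
  assumes f: "valid d {0..<r} k f" and g: "valid d {0..<c} k g" and M: "M = mk r c k f g"
  shows "card ((\<lambda>i. {j. j < c \<and> M i j}) ` {0..<r}) = k"
    and "\<And>i. i < r \<Longrightarrow> card {X \<in> (\<lambda>i. {j. j < c \<and> M i j}) ` {0..<r}. X \<subseteq> {j. j < c \<and> M i j}} = f i"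
proof -
  define H where "H a = {j. j < c \<and> k < a + g j}" for a
  have RH: "{j. j < c \<and> M i j} = H (f i)" if "i < r" for i using that by (auto simp: M mk_def H_def)
  have Hmono: "H a \<subseteq> H b \<longleftrightarrow> a \<le> b" if "a \<in> {1..k}" "b \<in> {1..k}" for a b
  proof
    assume "H a \<subseteq> H b"
    show "a \<le> b"
    proof (rule ccontr)
      assume "\<not> a \<le> b"
      then have "1 \<le> b" "b < a" "a \<le> k" using that by auto
      then obtain j where "j < c" "k < a + g j" "\<not> k < b + g j" using sep[OF g, of b a] by blast
      then show False using \<open>H a \<subseteq> H b\<close> by (auto simp: H_def)
    qed
  qed (auto simp: H_def)
  have injH: "inj_on H {1..k}"
  proof (rule inj_onI)
    fix x y assume "x \<in> {1..k}" "y \<in> {1..k}" "H x = H y"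
    then have "x \<le> y" "y \<le> x" using Hmono by blast+
    then show "x = y" by simp
  qed
  have fimg: "f ` {0..<r} = {1..k}"
  proof (intro equalityI subsetI)
    fix a assume "a \<in> f ` {0..<r}"
    then show "a \<in> {1..k}" using valid_range[OF f] by auto
  next
    fix a assume "a \<in> {1..k}"
    then obtain i where "i < r" "f i = a" using valid_surj[OF f, of a] by auto
    then show "a \<in> f ` {0..<r}" by auto
  qed
  have RS: "(\<lambda>i. {j. j < c \<and> M i j}) ` {0..<r} = H ` {1..k}"
  proof -
    have "(\<lambda>i. {j. j < c \<and> M i j}) ` {0..<r} = (\<lambda>i. H (f i)) ` {0..<r}"
      by (rule image_cong[OF refl]) (simp add: RH)
    also have "\<dots> = H ` f ` {0..<r}" by (simp add: image_image)
    finally have "(\<lambda>i. {j. j < c \<and> M i j}) ` {0..<r} = H ` f ` {0..<r}" .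
    then show ?thesis using fimg by simp
  qed
  show "card ((\<lambda>i. {j. j < c \<and> M i j}) ` {0..<r}) = k"
    unfolding RS using card_image[OF injH] by simp
  fix i assume i: "i < r"
  have fi: "f i \<in> {1..k}" using valid_range[OF f i] by auto
  have "{X \<in> H ` {1..k}. X \<subseteq> H (f i)} = H ` {1..f i}"
  proof (intro equalityI subsetI)
    fix X assume "X \<in> {X \<in> H ` {1..k}. X \<subseteq> H (f i)}"
    then obtain a where a: "a \<in> {1..k}" "X = H a" "H a \<subseteq> H (f i)" by auto
    then have "a \<le> f i" using Hmono fi by blast
    then show "X \<in> H ` {1..f i}" using a by auto
  next
    fix X assume "X \<in> H ` {1..f i}"
    then obtain a where a: "a \<in> {1..f i}" "X = H a" by auto
    then have "a \<in> {1..k}" using fi by auto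
    then show "X \<in> {X \<in> H ` {1..k}. X \<subseteq> H (f i)}" using a Hmono fi by auto
  qed
  moreover have "inj_on H {1..f i}" by (rule inj_on_subset[OF injH]) (use fi in auto)
  ultimately show "card {X \<in> (\<lambda>i. {j. j < c \<and> M i j}) ` {0..<r}. X \<subseteq> {j. j < c \<and> M i j}} = f i"
    unfolding RS RH[OF i] by (simp add: card_image)
qed

lemma mk_inj:
  assumes f: "valid d {0..<r} k f" and g: "valid d {0..<c} k g"
    and f': "valid d {0..<r} k' f'" and g': "valid d {0..<c} k' g'"
    and eq: "mk r c k f g = mk r c k' f' g'"
  shows "k = k' \<and> f = f' \<and> g = g'"
proof -
  let ?M = "mk r c k f g"
  have kk: "k = k'" using recover(1)[OF f g refl] recover(1)[OF f' g' eq] by simp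
  have "f i = f' i" for i
  proof (cases "i < r")
    case True then show ?thesis using recover(2)[OF f g refl True] recover(2)[OF f' g' eq True] by simp
  next
    case False then show ?thesis using f f' unfolding valid_def by auto
  qed
  moreover have "g j = g' j" for j
  proof (cases "j < c")
    case True
    have e1: "mk c r k g f = (\<lambda>j i. mk r c k f g i j)" by (simp only: mk_transpose)
    have e2: "mk c r k' g' f' = (\<lambda>j i. mk r c k' f' g' i j)" by (simp only: mk_transpose)
    have eqT: "mk c r k g f = mk c r k' g' f'" unfolding e1 e2 eq ..
    then show ?thesis using recover(2)[OF g f refl True] recover(2)[OF g' f' eqT True] by simp
  next
    case False then show ?thesis using g g' unfolding valid_def by auto
  qed
  ultimately show ?thesis using kk by auto
qed

lemma card_swap: "finite S \<Longrightarrow> a \<in> S \<Longrightarrow> b \<notin> S \<Longrightarrow> card (insert b (S - {a})) = card S"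
  by (simp add: card_Diff_singleton) (metis Suc_pred card_gt_0_iff empty_iff)

lemma noswap:
  assumes ls: "lonesum r c M" and Mm: "M \<in> mats r c"
    and idx: "i < r" "i' < r" "j < c" "j' < c"
    and e: "M i j" "M i' j'" "\<not> M i j'" "\<not> M i' j"
  shows False
proof -
  have ii: "i \<noteq> i'" using e by auto
  have jj: "j \<noteq> j'" using e by auto
  define N where "N x y = (if (x = i \<and> y = j) \<or> (x = i' \<and> y = j') then False
      else if (x = i \<and> y = j') \<or> (x = i' \<and> y = j) then True else M x y)" for x y
  have Nm: "N \<in> mats r c" using Mm idx unfolding mats_def N_def by auto
  have rows: "row_sum c N x = row_sum c M x" for x
  proof -
    let ?S = "{y. y < c \<and> M x y}"
    have fin: "finite ?S" by simp
    consider "x = i" | "x = i'" | "x \<noteq> i \<and> x \<noteq> i'" by blast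
    then show ?thesis
    proof cases
      case 1
      then have "{y. y < c \<and> N x y} = insert j' (?S - {j})" using ii jj idx unfolding N_def by auto
      then show ?thesis unfolding row_sum_def using card_swap[OF fin, of j j'] 1 e idx by simp
    next
      case 2
      then have "{y. y < c \<and> N x y} = insert j (?S - {j'})" using ii jj idx unfolding N_def by auto
      then show ?thesis unfolding row_sum_def using card_swap[OF fin, of j' j] 2 e idx by simp
    next
      case 3
      then have "{y. y < c \<and> N x y} = ?S" unfolding N_def by auto
      then show ?thesis unfolding row_sum_def by simp
    qed
  qed
  have cols: "col_sum r N y = col_sum r M y" for y
  proof -
    let ?S = "{x. x < r \<and> M x y}"
    have fin: "finite ?S" by simp
    consider "y = j" | "y = j'" | "y \<noteq> j \<and> y \<noteq> j'" by blast
    then show ?thesis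
    proof cases
      case 1
      then have "{x. x < r \<and> N x y} = insert i' (?S - {i})" using ii jj idx unfolding N_def by auto
      then show ?thesis unfolding col_sum_def using card_swap[OF fin, of i i'] 1 e idx by simp
    next
      case 2
      then have "{x. x < r \<and> N x y} = insert i (?S - {i'})" using ii jj idx unfolding N_def by auto
      then show ?thesis unfolding col_sum_def using card_swap[OF fin, of i' i] 2 e idx by simp
    next
      case 3
      then have "{x. x < r \<and> N x y} = ?S" unfolding N_def by auto
      then show ?thesis unfolding col_sum_def by simp
    qed
  qed
  have "N = M" using ls Nm rows cols unfolding lonesum_def by blast
  moreover have "N i j = False" unfolding N_def by simp
  ultimately show False using e by simp
qed
lemma in_L_mk:
  assumes L: "in_L d r c M"
  shows "\<exists>k f g. valid d {0..<r} k f \<and> valid d {0..<c} k g \<and> M = mk r c k f g"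
proof -
  have Mm: "M \<in> mats r c" and ls: "lonesum r c M" and rz: "\<forall>i<r. \<exists>j<c. M i j"
    and cz: "\<forall>j<c. \<exists>i<r. M i j"
    and rb: "\<forall>i<r. card {i'. i' < r \<and> same_row c M i i'} \<le> d"
    and cb: "\<forall>j<c. card {j'. j' < c \<and> same_col r M j j'} \<le> d"
    using L unfolding in_L_def by auto
  define R where "R i = {j. j < c \<and> M i j}" for i
  define RS where "RS = R ` {0..<r}"
  define k where "k = card RS"
  define \<phi> where "\<phi> X = card {Y\<in>RS. Y \<subseteq> X}" for X
  define f where "f i = (if i < r then \<phi> (R i) else 0)" for i
  have finRS: "finite RS" unfolding RS_def by simp
  have chain: "X \<subseteq> Y \<or> Y \<subseteq> X" if XY0: "X \<in> RS" "Y \<in> RS" for X Y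
  proof (rule ccontr)
    assume nc: "\<not> (X \<subseteq> Y \<or> Y \<subseteq> X)"
    obtain i where i: "i < r" "X = R i" using XY0(1) unfolding RS_def by auto
    obtain i' where i': "i' < r" "Y = R i'" using XY0(2) unfolding RS_def by auto
    note ii = i(1) i'(1) i(2) i'(2)
    obtain j where j: "j \<in> R i" "j \<notin> R i'" using nc ii by auto
    obtain j' where j': "j' \<in> R i'" "j' \<notin> R i" using nc ii by auto
    show False
      by (rule noswap[OF ls Mm, of i i' j j']) (use ii j j' in \<open>auto simp: R_def\<close>)
  qed
  have \<phi>le: "\<phi> X \<le> \<phi> Y \<longleftrightarrow> X \<subseteq> Y" if XY: "X \<in> RS" "Y \<in> RS" for X Y
  proof
    assume le: "\<phi> X \<le> \<phi> Y"
    show "X \<subseteq> Y"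
    proof (rule ccontr)
      assume "\<not> X \<subseteq> Y"
      then have YX: "Y \<subseteq> X" "Y \<noteq> X" using chain[OF XY] by auto
      have "{Z\<in>RS. Z \<subseteq> Y} \<subset> {Z\<in>RS. Z \<subseteq> X}" using YX XY by auto
      then have "\<phi> Y < \<phi> X" unfolding \<phi>_def by (rule psubset_card_mono[rotated]) (use finRS in auto)
      then show False using le by simp
    qed
  next
    assume "X \<subseteq> Y"
    then have "{Z\<in>RS. Z \<subseteq> X} \<subseteq> {Z\<in>RS. Z \<subseteq> Y}" by auto
    then show "\<phi> X \<le> \<phi> Y" unfolding \<phi>_def by (rule card_mono[rotated]) (use finRS in auto)
  qed
  have \<phi>range: "1 \<le> \<phi> X \<and> \<phi> X \<le> k" if X: "X \<in> RS" for X
  proof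
    have "X \<in> {Y\<in>RS. Y \<subseteq> X}" using X by auto
    moreover have "finite {Y\<in>RS. Y \<subseteq> X}" using finRS by auto
    ultimately show "1 \<le> \<phi> X" unfolding \<phi>_def by (metis One_nat_def Suc_leI card_gt_0_iff empty_iff)
    show "\<phi> X \<le> k" unfolding \<phi>_def k_def by (rule card_mono[OF finRS]) auto
  qed
  have inj\<phi>: "inj_on \<phi> RS"
  proof (rule inj_onI)
    fix X Y assume "X \<in> RS" "Y \<in> RS" "\<phi> X = \<phi> Y"
    then have "X \<subseteq> Y" "Y \<subseteq> X" using \<phi>le by (metis order_refl)+
    then show "X = Y" by blast
  qed
  have \<phi>img: "\<phi> ` RS = {1..k}"
  proof (rule card_subset_eq)
    show "\<phi> ` RS \<subseteq> {1..k}" using \<phi>range by auto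
    show "card (\<phi> ` RS) = card {1..k}" using card_image[OF inj\<phi>] by (simp add: k_def)
  qed simp
  have RinRS: "R i \<in> RS" if "i < r" for i using that unfolding RS_def by auto
  have fle: "f i \<le> f i' \<longleftrightarrow> R i \<subseteq> R i'" if "i < r" "i' < r" for i i'
    using that \<phi>le[OF RinRS RinRS] by (simp add: f_def)
  have frange: "1 \<le> f i \<and> f i \<le> k" if "i < r" for i
    using \<phi>range[OF RinRS[OF that]] that by (simp add: f_def)
  have fsurj: "\<exists>i<r. f i = a" if "1 \<le> a" "a \<le> k" for a
  proof -
    have "a \<in> \<phi> ` RS" using that \<phi>img by auto
    then obtain i where "i < r" "a = \<phi> (R i)" unfolding RS_def by auto
    then show ?thesis by (auto simp: f_def)
  qed
  have samerow: "same_row c M i i' \<longleftrightarrow> f i' = f i" if "i < r" "i' < r" for i i'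
  proof -
    have "same_row c M i i' \<longleftrightarrow> R i = R i'" unfolding same_row_def R_def by auto
    also have "\<dots> \<longleftrightarrow> f i' = f i" using fle[OF that] fle[OF that(2,1)] by auto
    finally show ?thesis .
  qed
  have fv: "valid d {0..<r} k f"
    unfolding valid_def
  proof (intro conjI allI ballI impI)
    fix i assume "i \<notin> {0..<r}" then show "f i = 0" by (simp add: f_def)
  next
    fix i assume "i \<in> {0..<r}" then show "1 \<le> f i" "f i \<le> k" using frange by auto
  next
    fix a assume "a \<in> {1..k}"
    then obtain i where "i < r" "f i = a" using fsurj[of a] by auto
    then show "\<exists>i\<in>{0..<r}. f i = a" by auto
  next
    fix a show "card {i \<in> {0..<r}. f i = a} \<le> d"
    proof (cases "\<exists>i0<r. f i0 = a")
      case True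
      then obtain i0 where i0: "i0 < r" "f i0 = a" by auto
      have "{i \<in> {0..<r}. f i = a} = {i'. i' < r \<and> same_row c M i0 i'}"
        using samerow[OF i0(1)] i0 by auto
      then show ?thesis using rb i0 by simp
    next
      case False
      have e: "{i \<in> {0..<r}. f i = a} = {}" using False by auto
      show ?thesis unfolding e by simp
    qed
  qed
  define m where "m j = Min (f ` {i. i < r \<and> M i j})" for j
  have mprop: "(\<exists>i0<r. M i0 j \<and> f i0 = m j) \<and> (\<forall>i<r. M i j \<longrightarrow> m j \<le> f i)" if j: "j < c" for j
  proof
    have fin: "finite (f ` {i. i < r \<and> M i j})" by simp
    have ne: "f ` {i. i < r \<and> M i j} \<noteq> {}" using cz j by auto
    show "\<exists>i0<r. M i0 j \<and> f i0 = m j" using Min_in[OF fin ne] unfolding m_def by auto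
    show "\<forall>i<r. M i j \<longrightarrow> m j \<le> f i" using Min_le[OF fin] unfolding m_def by auto
  qed
  have key: "M i j \<longleftrightarrow> m j \<le> f i" if ij: "i < r" "j < c" for i j
  proof
    assume "M i j" then show "m j \<le> f i" using mprop[OF ij(2)] ij by auto
  next
    assume le: "m j \<le> f i"
    obtain i0 where i0: "i0 < r" "M i0 j" "f i0 = m j" using mprop[OF ij(2)] by auto
    then have "R i0 \<subseteq> R i" using fle[OF i0(1) ij(1)] le by simp
    then show "M i j" using i0 ij by (auto simp: R_def)
  qed
  have mrange: "1 \<le> m j \<and> m j \<le> k" if "j < c" for j
    using mprop[OF that] frange by metis
  define g where "g j = (if j < c then k + 1 - m j else 0)" for j
  have Meq: "M = mk r c k f g"
  proof (intro ext)
    fix i j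
    show "M i j = mk r c k f g i j"
    proof (cases "i < r \<and> j < c")
      case True
      then show ?thesis using key[of i j] mrange[of j] by (auto simp: mk_def g_def)
    next
      case False then show ?thesis using Mm by (auto simp: mats_def mk_def)
    qed
  qed
  have mex: "\<exists>j<c. m j = a" if a: "1 \<le> a" "a \<le> k" for a
  proof -
    obtain i where i: "i < r" "f i = a" using fsurj[OF a] by auto
    show ?thesis
    proof (cases "a = 1")
      case True
      obtain j where j: "j < c" "M i j" using rz i by auto
      then have "m j \<le> 1" using key[OF i(1) j(1)] i True by simp
      then show ?thesis using mrange[OF j(1)] j True by (intro exI[of _ j]) auto
    next
      case False
      have "1 \<le> a - 1" "a - 1 \<le> k" using a False by auto
      then obtain i' where i': "i' < r" "f i' = a - 1" using fsurj[of "a - 1"] by blast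
      have "\<not> R i \<subseteq> R i'" using fle[OF i(1) i'(1)] i i' a False by auto
      then obtain j where j: "j \<in> R i" "j \<notin> R i'" by auto
      have jc: "j < c" and Mij: "M i j" using j by (auto simp: R_def)
      have "m j \<le> a" using key[OF i(1) jc] Mij i by simp
      moreover have "a \<le> m j"
      proof (rule ccontr)
        assume "\<not> a \<le> m j"
        obtain i0 where i0: "i0 < r" "M i0 j" "f i0 = m j" using mprop[OF jc] by auto
        then have "f i0 \<le> f i'" using \<open>\<not> a \<le> m j\<close> i' by simp
        then have "R i0 \<subseteq> R i'" using fle[OF i0(1) i'(1)] by simp
        then show False using i0 j jc by (auto simp: R_def)
      qed
      ultimately show ?thesis using jc by (intro exI[of _ j]) auto
    qed
  qed
  have gv: "valid d {0..<c} k g"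
    unfolding valid_def
  proof (intro conjI allI ballI impI)
    fix j assume "j \<notin> {0..<c}" then show "g j = 0" by (simp add: g_def)
  next
    fix j assume "j \<in> {0..<c}" then show "1 \<le> g j" "g j \<le> k" using mrange[of j] by (auto simp: g_def)
  next
    fix b assume b: "b \<in> {1..k}"
    then have "1 \<le> k + 1 - b" "k + 1 - b \<le> k" by auto
    then obtain j where "j < c" "m j = k + 1 - b" using mex[of "k + 1 - b"] by blast
    then show "\<exists>j\<in>{0..<c}. g j = b" using b by (intro bexI[of _ j]) (auto simp: g_def)
  next
    fix b show "card {j \<in> {0..<c}. g j = b} \<le> d"
    proof (cases "\<exists>j0<c. g j0 = b")
      case True
      then obtain j0 where j0: "j0 < c" "g j0 = b" by auto
      have sub: "{j \<in> {0..<c}. g j = b} \<subseteq> {j'. j' < c \<and> same_col r M j0 j'}"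
      proof
        fix j assume "j \<in> {j \<in> {0..<c}. g j = b}"
        then have j: "j < c" "g j = g j0" using j0 by auto
        then have "m j = m j0" using mrange[OF j(1)] mrange[OF j0(1)] j0(1) by (simp add: g_def) linarith
        then have "\<forall>i<r. M i j0 = M i j" using key j j0 by simp
        then show "j \<in> {j'. j' < c \<and> same_col r M j0 j'}" using j by (simp add: same_col_def)
      qed
      have "card {j \<in> {0..<c}. g j = b} \<le> card {j'. j' < c \<and> same_col r M j0 j'}"
        by (rule card_mono[OF _ sub]) simp
      then show ?thesis using cb j0 by (meson le_trans)
    next
      case False
      have e: "{j \<in> {0..<c}. g j = b} = {}" using False by auto
      show ?thesis unfolding e by simp
    qed
  qed
  show ?thesis using fv gv Meq by blast
qed
lemma card_inL:
  "card {M. in_L d r c M} = (\<Sum>k\<le>r. card (VS d {0..<r} k) * card (VS d {0..<c} k))"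
proof -
  define T where "T = Sigma {..r} (\<lambda>k. VS d {0..<r} k \<times> VS d {0..<c} k)"
  define \<Phi> where "\<Phi> = (\<lambda>(k, f, g). mk r c k f g)"
  have "bij_betw \<Phi> T {M. in_L d r c M}"
  proof (rule bij_betw_imageI)
    show "inj_on \<Phi> T"
    proof (rule inj_onI)
      fix x y assume x: "x \<in> T" and y: "y \<in> T" and e: "\<Phi> x = \<Phi> y"
      obtain k f g where xx: "x = (k, f, g)" by (cases x) auto
      obtain k' f' g' where yy: "y = (k', f', g')" by (cases y) auto
      show "x = y"
        using mk_inj[of d r k f c g k' f' g'] x y e unfolding xx yy T_def \<Phi>_def VS_def by auto
    qed
    show "\<Phi> ` T = {M. in_L d r c M}"
    proof (intro equalityI subsetI)
      fix M assume "M \<in> \<Phi> ` T"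
      then show "M \<in> {M. in_L d r c M}" using mk_in_L unfolding T_def \<Phi>_def VS_def by auto
    next
      fix M assume "M \<in> {M. in_L d r c M}"
      then obtain k f g where v: "valid d {0..<r} k f" "valid d {0..<c} k g" and M: "M = mk r c k f g"
        using in_L_mk by blast
      have "(k, f, g) \<in> T" using v valid_le[OF v(1)] unfolding T_def VS_def by auto
      then show "M \<in> \<Phi> ` T" unfolding M \<Phi>_def by force
    qed
  qed
  then have "card {M. in_L d r c M} = card T" by (simp add: bij_betw_same_card)
  also have "\<dots> = (\<Sum>k\<le>r. card (VS d {0..<r} k \<times> VS d {0..<c} k))"
    unfolding T_def by (rule card_SigmaI) (auto intro: finite_VS)
  also have "\<dots> = (\<Sum>k\<le>r. card (VS d {0..<r} k) * card (VS d {0..<c} k))"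
    by (simp add: card_cartesian_product)
  finally show ?thesis .
qed

lemma combi: "L_series d $ r $ c = (\<Sum>k\<le>r. aa d r k * aa d c k)"
proof -
  have "L_series d $ r $ c = of_nat (card {M. in_L d r c M}) / (fact r * fact c)"
    by (simp add: L_series_def)
  also have "\<dots> = (\<Sum>k\<le>r. (of_nat (card (VS d {0..<r} k)) * of_nat (card (VS d {0..<c} k))) / (fact r * fact c))"
    by (simp add: card_inL sum_divide_distrib)
  also have "\<dots> = (\<Sum>k\<le>r. aa d r k * aa d c k)"
    by (rule sum.cong[OF refl]) (simp add: card_VS)
  finally show ?thesis .
qed
lemma combi': assumes "r \<le> K" shows "L_series d $ r $ c = (\<Sum>k\<le>K. aa d r k * aa d c k)"
proof -
  have "(\<Sum>k\<le>K. aa d r k * aa d c k) = (\<Sum>k\<le>r. aa d r k * aa d c k)"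
    by (rule sum.mono_neutral_right) (use assms aa_zero in auto)
  then show ?thesis by (simp add: combi)
qed

lemma DL_one: "(1 - Abs_fps (\<lambda>i. fps_const (FF d $ i)) * fps_const (FF d)) * L_series d = 1"
proof (rule fps_ext, rule fps_ext)
  fix r c
  let ?A = "Abs_fps (\<lambda>i. fps_const (FF d $ i))"
  let ?L = "L_series d"
  have "(?A * (fps_const (FF d) * ?L)) $ r $ c
      = (\<Sum>s=0..r. FF d $ s * (\<Sum>t=0..c. FF d $ t * ?L $ (r-s) $ (c-t)))"
  proof -
    have "(?A * (fps_const (FF d) * ?L)) $ r = (\<Sum>s=0..r. fps_const (FF d $ s) * (FF d * ?L $ (r-s)))"
      by (simp add: fps_mult_nth[of ?A])
    then show ?thesis by (simp add: fps_sum_nth fps_mult_nth[of "FF d"])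
  qed
  also have "\<dots> = (\<Sum>s=0..r. FF d $ s * (\<Sum>t=0..c. FF d $ t * (\<Sum>k\<le>r. aa d (r-s) k * aa d (c-t) k)))"
    by (intro sum.cong refl arg_cong2[where f="(*)"]) (simp add: combi')
  also have "\<dots> = (\<Sum>k\<le>r. (\<Sum>s=0..r. FF d $ s * aa d (r-s) k) * (\<Sum>t=0..c. FF d $ t * aa d (c-t) k))"
    by (simp add: sum_distrib_left sum_distrib_right sum.swap[of _ "{..r}"] algebra_simps)
  also have "\<dots> = (\<Sum>k\<le>r. aa d r (Suc k) * aa d c (Suc k))"
    by (simp add: aa_Suc)
  also have "\<dots> = ?L $ r $ c - (if r = 0 \<and> c = 0 then 1 else 0)"
  proof -
    have "?L $ r $ c = (\<Sum>k\<le>Suc r. aa d r k * aa d c k)" by (rule combi') simp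
    also have "\<dots> = aa d r 0 * aa d c 0 + (\<Sum>k\<le>r. aa d r (Suc k) * aa d c (Suc k))"
      by (rule sum.atMost_Suc_shift)
    finally show ?thesis by (simp add: aa_0)
  qed
  finally have "(?A * (fps_const (FF d) * ?L)) $ r $ c = ?L $ r $ c - (if r = 0 \<and> c = 0 then 1 else 0)" .
  moreover have "(1 - ?A * fps_const (FF d)) * ?L = ?L - ?A * (fps_const (FF d) * ?L)"
    by (simp add: algebra_simps)
  ultimately show "((1 - ?A * fps_const (FF d)) * ?L) $ r $ c = (1 :: rat fps fps) $ r $ c"
    by (cases "r = 0"; cases "c = 0") simp_all
qed

theorem theorem3:
  fixes d :: nat
  assumes "d \<ge> 1"
  shows "L_series d = inverse (E_x d + E_y d - E_x d * E_y d)"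
proof -
  let ?A = "Abs_fps (\<lambda>i. fps_const (FF d $ i))"
  have Ex: "E_x d = ?A + 1"
    by (rule fps_ext) (auto simp: E_x_def FF_def E_trunc_def)
  have Ey: "E_y d = fps_const (FF d) + 1"
  proof -
    have "fps_const (E_trunc d - 1) = fps_const (E_trunc d) - 1" by (metis fps_const_1_eq_1 fps_const_sub)
    then show ?thesis by (simp add: E_y_def FF_def)
  qed
  define D where "D = E_x d + E_y d - E_x d * E_y d"
  have D: "D = 1 - ?A * fps_const (FF d)"
    unfolding D_def Ex Ey by (simp add: algebra_simps)
  have DL: "D * L_series d = 1" using DL_one D by simp
  have D0: "D $ 0 = 1" unfolding D by simp
  have L0: "L_series d $ 0 = 1" using arg_cong[OF DL, of "\<lambda>f. f $ 0"] D0 by simp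
  have inv1: "inverse (1 :: rat fps) = 1" by (rule fps_inverse_unique) simp
  have "fps_right_inverse D (L_series d $ 0) = L_series d"
    by (rule fps_lr_inverse_unique_ring1(2)) (use DL D0 L0 in auto)
  moreover have "inverse (D $ 0) = L_series d $ 0" using D0 L0 inv1 by simp
  ultimately have "inverse D = L_series d" unfolding fps_inverse_def by simp
  then show ?thesis unfolding D_def by simp
qed
end
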